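(* Consider the single-authority continuum model described in the context with utility $\xi(\bar s_h,x)$, where $\xi$ is monotone, differentiable and concave. Then the state-dependent APM $$A_m(y,s,\omega)\equiv h^{-1}\left(h(s)+\frac{\xi_{x_m}(\bar s_h(y,\omega),y)}{\xi_{\bar s_h}(\bar s_h(y,\omega),y)}\right)$$ implements a first-best optimal allocation, where $\bar s_h(y,\omega)$ is the score index in state $\omega$ when the highest-scoring $y=\{y_m\}_{m\in\mathcal M}$ agents of each group are allocated the resource, and $\xi_{x_m}$, $\xi_{\bar s_h}$ denote partial derivatives of $\xi$.
   Context: An authority allocates a resource of measure $q\in(0,1)$ to agents with types $(s,m)\in[0,1]\times\mathcal M$ ($\mathcal M$ finite). States $\omega$ are type distributions with densities $f_\omega$. Allocations are measurable $\mu:\Theta\to\{0,1\}$ allocating measure at most $q$. $h:[0,1]\to\mathbb R_+$ continuous strictly increasing; $\bar s_h(\mu,\omega)=\int\mu h\,dF_\omega$; $x_m(\mu,\omega)=\int_0^1\mu(s,m)f_\omega(s,m)ds$. A first-best optimal allocation is one maximizing $\xi(\bar s_h(\mu,\omega),x(\mu,\omega))$ in every state. A state-dependent APM $\hat A=\{\hat A_m\}$, $\hat A_m:\mathbb R^{|\mathcal M|}\times[0,1]\times\Omega\to\mathbb R$, implements $\mu$ in state $\omega$ if (1) $\mu(\theta)=1$ iff for all $\theta'$ with $\mu(\theta')=0$, $\hat A_{m(\theta)}(x(\mu,\omega),s(\theta),\omega)>\hat A_{m(\theta')}(x(\mu,\omega),s(\theta'),\omega)$, and (2) $\sum_mx_m(\mu,\omega)=q$.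 *)

theory Defs
  imports "HOL-Analysis.Analysis"
begin

text \<open>Types are pairs (s,m) with s in [0,1] and m in a finite type 'm.
A state is represented by its density f :: 'm => real => real (f m s = f_omega(s,m)).
An allocation is mu :: 'm => real => bool (mu m s = True iff type (s,m) gets the resource).\<close>

definition is_state :: "('m::finite \<Rightarrow> real \<Rightarrow> real) \<Rightarrow> bool" where
  "is_state f \<longleftrightarrow>
     (\<forall>m. set_integrable lebesgue {0..1} (f m)) \<and>
     (\<forall>m s. s \<in> {0..1} \<longrightarrow> 0 \<le> f m s) \<and>
     (\<Sum>m\<in>UNIV. (LINT s:{0..1}|lebesgue. f m s)) = 1"

definition xalloc :: "('m::finite \<Rightarrow> real \<Rightarrow> real) \<Rightarrow> ('m \<Rightarrow> real \<Rightarrow> bool) \<Rightarrow> real^'m" where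
  "xalloc f \<mu> = (\<chi> m. (LINT s:{0..1}|lebesgue. (if \<mu> m s then f m s else 0)))"

definition sbar :: "(real \<Rightarrow> real) \<Rightarrow> ('m::finite \<Rightarrow> real \<Rightarrow> real) \<Rightarrow> ('m \<Rightarrow> real \<Rightarrow> bool) \<Rightarrow> real" where
  "sbar h f \<mu> = (\<Sum>m\<in>UNIV. (LINT s:{0..1}|lebesgue. (if \<mu> m s then h s * f m s else 0)))"

definition allocation :: "real \<Rightarrow> ('m::finite \<Rightarrow> real \<Rightarrow> real) \<Rightarrow> ('m \<Rightarrow> real \<Rightarrow> bool) \<Rightarrow> bool" where
  "allocation q f \<mu> \<longleftrightarrow>
     (\<forall>m. {s \<in> {0..1}. \<mu> m s} \<in> sets lebesgue) \<and> (\<Sum>m\<in>UNIV. xalloc f \<mu> $ m) \<le> q"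

definition first_best ::
  "(real \<times> (real^'m) \<Rightarrow> real) \<Rightarrow> (real \<Rightarrow> real) \<Rightarrow> real \<Rightarrow> ('m::finite \<Rightarrow> real \<Rightarrow> real)
     \<Rightarrow> ('m \<Rightarrow> real \<Rightarrow> bool) \<Rightarrow> bool" where
  "first_best \<xi> h q f \<mu> \<longleftrightarrow> allocation q f \<mu> \<and>
     (\<forall>\<mu>'. allocation q f \<mu>' \<longrightarrow> \<xi> (sbar h f \<mu>', xalloc f \<mu>') \<le> \<xi> (sbar h f \<mu>, xalloc f \<mu>))"

text \<open>Score index when the highest-scoring y_m agents of each group m are allocated.\<close>
definition sbar_top :: "(real \<Rightarrow> real) \<Rightarrow> ('m::finite \<Rightarrow> real \<Rightarrow> real) \<Rightarrow> real^'m \<Rightarrow> real" where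
  "sbar_top h f y = (\<Sum>m\<in>UNIV. (THE v. \<exists>t\<in>{0..1}.
       (LINT s:{t..1}|lebesgue. f m s) = y $ m \<and> v = (LINT s:{t..1}|lebesgue. h s * f m s)))"

definition partial_s :: "(real \<times> (real^'m::finite) \<Rightarrow> real) \<Rightarrow> real \<times> (real^'m) \<Rightarrow> real" where
  "partial_s \<xi> p = frechet_derivative \<xi> (at p) (1, 0)"

definition partial_x :: "(real \<times> (real^'m::finite) \<Rightarrow> real) \<Rightarrow> 'm \<Rightarrow> real \<times> (real^'m) \<Rightarrow> real" where
  "partial_x \<xi> m p = frechet_derivative \<xi> (at p) (0, axis m 1)"

text \<open>The APM of the proposition in state f; g plays the role of h^{-1}.\<close>
definition APM :: "(real \<Rightarrow> real) \<Rightarrow> (real \<Rightarrow> real) \<Rightarrow> (real \<times> (real^'m::finite) \<Rightarrow> real)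
     \<Rightarrow> ('m \<Rightarrow> real \<Rightarrow> real) \<Rightarrow> 'm \<Rightarrow> real^'m \<Rightarrow> real \<Rightarrow> real" where
  "APM g h \<xi> f m y s =
     g (h s + partial_x \<xi> m (sbar_top h f y, y) / partial_s \<xi> (sbar_top h f y, y))"

definition implements :: "real \<Rightarrow> ('m::finite \<Rightarrow> real^'m \<Rightarrow> real \<Rightarrow> real)
     \<Rightarrow> ('m \<Rightarrow> real \<Rightarrow> real) \<Rightarrow> ('m \<Rightarrow> real \<Rightarrow> bool) \<Rightarrow> bool" where
  "implements q A f \<mu> \<longleftrightarrow>
     (\<forall>m s. s \<in> {0..1} \<longrightarrow>
        (\<mu> m s \<longleftrightarrow> (\<forall>m' s'. s' \<in> {0..1} \<and> \<not> \<mu> m' s' \<longrightarrow>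
              A m (xalloc f \<mu>) s > A m' (xalloc f \<mu>) s'))) \<and>
     (\<Sum>m\<in>UNIV. xalloc f \<mu> $ m) = q"

end

theory Submission
  imports Defs
begin


definition W :: "(real \<Rightarrow> real) \<Rightarrow> (real \<Rightarrow> real) \<Rightarrow> real" where
  "W g w = (LINT s:{0..1}|lebesgue. w s * g s)"

lemma wint:
  fixes g w :: "real \<Rightarrow> real"
  assumes g: "set_integrable lebesgue {0..1} g" and w: "w \<in> borel_measurable lebesgue"
    and b: "\<And>s. s \<in> {0..1} \<Longrightarrow> \<bar>w s\<bar> \<le> B"
  shows "set_integrable lebesgue {0..1} (\<lambda>s. w s * g s)"
proof -
  have B0: "\<bar>w 0\<bar> \<le> B" by (rule b) simp
  have B: "0 \<le> B" using B0 by (meson abs_ge_zero order_trans)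
  have g': "set_integrable lebesgue {0..1} (\<lambda>s. (B+1) * g s)"
    using g by auto
  show ?thesis
  proof (rule set_integrable_bound[OF g'])
    have "(\<lambda>x. indicator {0..1} x *\<^sub>R g x) \<in> borel_measurable lebesgue"
      using g unfolding set_integrable_def by auto
    then have "(\<lambda>x. w x * (indicator {0..1} x *\<^sub>R g x)) \<in> borel_measurable lebesgue"
      using w by measurable
    then show "set_borel_measurable lebesgue {0..1} (\<lambda>s. w s * g s)"
      unfolding set_borel_measurable_def by (simp add: mult.left_commute)
    show "AE x in (lebesgue::real measure). x \<in> {0..1} \<longrightarrow> norm (w x * g x) \<le> norm ((B + 1) * g x)"
    proof (intro AE_I2 impI)
      fix x :: real assume x: "x \<in> {0..1}"
      have "\<bar>w x\<bar> * \<bar>g x\<bar> \<le> (B+1) * \<bar>g x\<bar>" using b[OF x] by (intro mult_right_mono) auto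
      then show "norm (w x * g x) \<le> norm ((B + 1) * g x)" using B by (simp add: abs_mult)
    qed
  qed
qed

lemma W_cong: "(\<And>s. s \<in> {0..1} \<Longrightarrow> w1 s * g1 s = w2 s * g2 s) \<Longrightarrow> W g1 w1 = W g2 w2"
  unfolding W_def by (rule set_lebesgue_integral_cong) auto

lemma ind_meas: "indicator {t..} \<in> borel_measurable (lebesgue :: real measure)"
  by (simp add: measurable_completion)

definition bw :: "(real \<Rightarrow> real) \<Rightarrow> bool" where
  "bw w \<longleftrightarrow> w \<in> borel_measurable lebesgue \<and> (\<exists>B. \<forall>s\<in>{0..1}. \<bar>w s\<bar> \<le> B)"

lemma bw_int: "set_integrable lebesgue {0..1} g \<Longrightarrow> bw w \<Longrightarrow> set_integrable lebesgue {0..1} (\<lambda>s. w s * g s)"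
  unfolding bw_def using wint by blast

lemma bw_lin: 
  assumes "bw w1" "bw w2" shows "bw (\<lambda>s. a * w1 s + b * w2 s)"
proof -
  obtain B1 B2 where b: "\<forall>s\<in>{0..1}. \<bar>w1 s\<bar> \<le> B1" "\<forall>s\<in>{0..1}. \<bar>w2 s\<bar> \<le> B2"
    using assms unfolding bw_def by blast
  have "\<forall>s\<in>{0..1}. \<bar>a * w1 s + b * w2 s\<bar> \<le> \<bar>a\<bar> * B1 + \<bar>b\<bar> * B2"
  proof
    fix s :: real assume s: "s \<in> {0..1}"
    have "\<bar>a * w1 s + b * w2 s\<bar> \<le> \<bar>a\<bar> * \<bar>w1 s\<bar> + \<bar>b\<bar> * \<bar>w2 s\<bar>"
      by (metis abs_mult abs_triangle_ineq)
    also have "\<dots> \<le> \<bar>a\<bar> * B1 + \<bar>b\<bar> * B2"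
      using b s by (intro add_mono mult_left_mono) auto
    finally show "\<bar>a * w1 s + b * w2 s\<bar> \<le> \<bar>a\<bar> * B1 + \<bar>b\<bar> * B2" .
  qed
  moreover have "(\<lambda>s. a * w1 s + b * w2 s) \<in> borel_measurable lebesgue"
    using assms unfolding bw_def by (intro borel_measurable_add borel_measurable_times) auto
  ultimately show ?thesis unfolding bw_def by blast
qed

lemma bw_ind: "bw (indicator {t..})"
  unfolding bw_def using ind_meas by (intro conjI exI[of _ 1]) (auto split: split_indicator)

lemma bw_ind_set: "S \<in> sets lebesgue \<Longrightarrow> bw (indicator S)"
  unfolding bw_def by (intro conjI exI[of _ 1]) (auto split: split_indicator)

lemma bw_const: "bw (\<lambda>s. c)"
  unfolding bw_def by auto

lemma W_lin:
  assumes g: "set_integrable lebesgue {0..1} g" and w: "bw w1" "bw w2"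
  shows "W g (\<lambda>s. a * w1 s + b * w2 s) = a * W g w1 + b * W g w2"
proof -
  have i1: "set_integrable lebesgue {0..1} (\<lambda>s. a * (w1 s * g s))" using bw_int[OF g w(1)] by auto
  have i2: "set_integrable lebesgue {0..1} (\<lambda>s. b * (w2 s * g s))" using bw_int[OF g w(2)] by auto
  have "W g (\<lambda>s. a * w1 s + b * w2 s) = (LINT s:{0..1}|lebesgue. a * (w1 s * g s) + b * (w2 s * g s))"
    unfolding W_def by (simp add: algebra_simps)
  also have "\<dots> = a * W g w1 + b * W g w2"
    unfolding W_def using set_integral_add(2)[OF i1 i2] by simp
  finally show ?thesis .
qed

lemma W_mono2:
  assumes g: "set_integrable lebesgue {0..1} g1" "set_integrable lebesgue {0..1} g2"
    and w: "bw w1" "bw w2"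
    and le: "\<And>s. s \<in> {0..1} \<Longrightarrow> w1 s * g1 s \<le> w2 s * g2 s"
  shows "W g1 w1 \<le> W g2 w2"
  unfolding W_def
  by (rule set_integral_mono[OF bw_int[OF g(1) w(1)] bw_int[OF g(2) w(2)]]) (use le in auto)

lemma W_mono:
  assumes g: "set_integrable lebesgue {0..1} g" "\<And>s. s \<in> {0..1} \<Longrightarrow> 0 \<le> g s"
    and w: "bw w1" "bw w2"
    and le: "\<And>s. s \<in> {0..1} \<Longrightarrow> w1 s \<le> w2 s"
  shows "W g w1 \<le> W g w2"
  by (rule W_mono2[OF g(1) g(1) w]) (use le g(2) in \<open>auto intro: mult_right_mono\<close>)

lemma W_zero: "W g (\<lambda>s. 0) = 0"
  unfolding W_def by simp

lemma W_ind:
  assumes g: "set_integrable lebesgue {0..1} g" and t: "t \<in> {0..1}"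
  shows "W g (indicator {t..}) = (LINT s:{t..1}|lebesgue. g s)"
    "W g (indicator {t..}) = integral {t..1} g"
proof -
  have sub: "set_integrable lebesgue {t..1} g"
    by (rule set_integrable_subset[OF g]) (use t in auto)
  show 1: "W g (indicator {t..}) = (LINT s:{t..1}|lebesgue. g s)"
    unfolding W_def set_lebesgue_integral_def
    by (rule Bochner_Integration.integral_cong) (use t in \<open>auto split: split_indicator\<close>)
  show "W g (indicator {t..}) = integral {t..1} g"
    using 1 set_lebesgue_integral_eq_integral(2)[OF sub] by simp
qed

lemma W_ind_cont:
  assumes g: "set_integrable lebesgue {0..1} g"
  shows "continuous_on {0..1} (\<lambda>t. W g (indicator {t..}))"
proof -
  have "g integrable_on {0..1}" using set_lebesgue_integral_eq_integral(1)[OF g] .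
  then have "continuous_on {0..1} (\<lambda>t. integral {t..1} g)" by (rule indefinite_integral_continuous_1')
  then show ?thesis by (rule continuous_on_eq) (use W_ind(2)[OF g] in auto)
qed

lemma borel_lebesgue_meas: "(g::real\<Rightarrow>real) \<in> borel_measurable borel \<Longrightarrow> g \<in> borel_measurable lebesgue"
  by (metis measurable_lborel2 measurable_completion)

lemma hf_int:
  fixes f h :: "real \<Rightarrow> real"
  assumes f: "set_integrable lebesgue {0..1} f" "\<And>s. s \<in> {0..1} \<Longrightarrow> 0 \<le> f s"
    and h: "continuous_on {0..1} h" "strict_mono_on {0..1} h" "\<forall>s\<in>{0..1}. 0 \<le> h s"
  shows "set_integrable lebesgue {0..1} (\<lambda>s. h s * f s)"
proof -
  have mh: "(\<lambda>x. indicator {0..1} x *\<^sub>R h x) \<in> borel_measurable borel"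
    by (rule borel_measurable_continuous_on_indicator) (use h in \<open>auto intro: borel_closed\<close>)
  have m: "(\<lambda>x. indicator {0..1} x * h x) \<in> borel_measurable lebesgue"
    using borel_lebesgue_meas[OF mh] by simp
  have "set_integrable lebesgue {0..1} (\<lambda>s. (indicator {0..1} s * h s) * f s)"
    by (rule wint[OF f(1) m, of "h 1"]) (use h in \<open>auto simp: strict_mono_on_less_eq\<close>)
  then show ?thesis unfolding set_integrable_def
    by (rule Bochner_Integration.integrable_cong[THEN iffD1, rotated -1]) (auto split: split_indicator)
qed

lemma rearr:
  fixes f h w :: "real \<Rightarrow> real"
  assumes f: "set_integrable lebesgue {0..1} f" "\<And>s. s \<in> {0..1} \<Longrightarrow> 0 \<le> f s"
    and h: "continuous_on {0..1} h" "strict_mono_on {0..1} h" "\<forall>s\<in>{0..1}. 0 \<le> h s"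
    and w: "bw w" "\<And>s. s \<in> {0..1} \<Longrightarrow> 0 \<le> w s \<and> w s \<le> 1"
  shows "\<exists>t\<in>{0..1}. W f (indicator {t..}) = W f w \<and>
           W (\<lambda>s. h s * f s) w \<le> W (\<lambda>s. h s * f s) (indicator {t..})"
proof -
  define F where "F t = W f (indicator {t..})" for t
  have Fc: "continuous_on {0..1} F" unfolding F_def by (rule W_ind_cont[OF f(1)])
  have F1: "F 1 = 0" unfolding F_def using W_ind(2)[OF f(1), of 1] by simp
  have F0: "W f w \<le> F 0" unfolding F_def
    by (rule W_mono[OF f w(1) bw_ind]) (use w(2) in auto)
  have Fw0: "0 \<le> W f w" using W_mono[OF f bw_const w(1), of 0] w(2) W_zero by auto
  obtain t where t: "0 \<le> t" "t \<le> 1" "F t = W f w"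
    using IVT2'[of F 1 "W f w" 0] Fc F1 F0 Fw0 by auto
  have hf: "set_integrable lebesgue {0..1} (\<lambda>s. h s * f s)" by (rule hf_int[OF f h])
  have key: "W f (\<lambda>s. h t * indicator {t..} s + (- h t) * w s) \<le>
             W (\<lambda>s. h s * f s) (\<lambda>s. 1 * indicator {t..} s + (-1) * w s)"
  proof (rule W_mono2[OF f(1) hf bw_lin[OF bw_ind w(1)] bw_lin[OF bw_ind w(1)]])
    fix s :: real assume s: "s \<in> {0..1}"
    have "0 \<le> (indicator {t..} s - w s) * (h s - h t) * f s"
    proof (cases "t \<le> s")
      case True
      then have "h t \<le> h s" using h(2) s t by (auto simp: strict_mono_on_less_eq)
      then show ?thesis using True w(2)[OF s] f(2)[OF s] by (auto intro!: mult_nonneg_nonneg)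
    next
      case False
      then have "h s \<le> h t" using h(2) s t by (auto simp: strict_mono_on_less_eq)
      then have "0 \<le> w s * (h t - h s) * f s" using w(2)[OF s] f(2)[OF s] by (auto intro!: mult_nonneg_nonneg)
      then show ?thesis using False by (simp add: algebra_simps)
    qed
    then show "(h t * indicator {t..} s + - h t * w s) * f s
          \<le> (1 * indicator {t..} s + - 1 * w s) * (h s * f s)" by (simp add: algebra_simps)
  qed
  have "W f (\<lambda>s. h t * indicator {t..} s + (- h t) * w s) = 0"
    using W_lin[OF f(1) bw_ind[of t] w(1), where a="h t" and b="- h t"] t(3) unfolding F_def by simp
  moreover have "W (\<lambda>s. h s * f s) (\<lambda>s. 1 * indicator {t..} s + (-1) * w s) =
     W (\<lambda>s. h s * f s) (indicator {t..}) - W (\<lambda>s. h s * f s) w"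
    using W_lin[OF hf bw_ind[of t] w(1), where a=1 and b="-1"] by simp
  ultimately show ?thesis using key t unfolding F_def by auto
qed

lemma sandwich:
  fixes f h w :: "real \<Rightarrow> real"
  assumes f: "set_integrable lebesgue {0..1} f" "\<And>s. s \<in> {0..1} \<Longrightarrow> 0 \<le> f s"
    and h: "continuous_on {0..1} h" "strict_mono_on {0..1} h" "\<forall>s\<in>{0..1}. 0 \<le> h s"
    and w: "bw w1" "bw w" "bw w2"
    and le: "\<And>s. s \<in> {0..1} \<Longrightarrow> 0 \<le> w1 s \<and> w1 s \<le> w s \<and> w s \<le> w2 s"
    and eq: "W f w1 = W f w2"
  shows "W f w = W f w1" "W (\<lambda>s. h s * f s) w = W (\<lambda>s. h s * f s) w1"
proof -
  have "W f w1 \<le> W f w" by (rule W_mono[OF f w(1) w(2)]) (use le in auto)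
  moreover have "W f w \<le> W f w2" by (rule W_mono[OF f w(2) w(3)]) (use le in auto)
  ultimately show "W f w = W f w1" using eq by auto
  have hf: "set_integrable lebesgue {0..1} (\<lambda>s. h s * f s)" by (rule hf_int[OF f h])
  have hf0: "\<And>s. s \<in> {0..1} \<Longrightarrow> 0 \<le> h s * f s" using h(3) f(2) by auto
  have a: "W (\<lambda>s. h s * f s) w1 \<le> W (\<lambda>s. h s * f s) w"
    by (rule W_mono[OF hf hf0 w(1) w(2)]) (use le in auto)
  have b: "W (\<lambda>s. h s * f s) (\<lambda>s. 1 * w s + (-1) * w1 s) \<le> W f (\<lambda>s. h 1 * w2 s + (- h 1) * w1 s)"
  proof (rule W_mono2[OF hf f(1) bw_lin[OF w(2) w(1)] bw_lin[OF w(3) w(1)]])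
    fix s :: real assume s: "s \<in> {0..1}"
    have "h s \<le> h 1" using h(2) s by (auto simp: strict_mono_on_less_eq)
    then have "(w s - w1 s) * (h s * f s) \<le> (w2 s - w1 s) * (h 1 * f s)"
      using le[OF s] f(2)[OF s] h(3) s
      by (intro mult_mono) (auto intro!: mult_right_mono)
    then show "(1 * w s + - 1 * w1 s) * (h s * f s) \<le> (h 1 * w2 s + - h 1 * w1 s) * f s"
      by (simp add: algebra_simps)
  qed
  have "W (\<lambda>s. h s * f s) (\<lambda>s. 1 * w s + (-1) * w1 s) = W (\<lambda>s. h s * f s) w - W (\<lambda>s. h s * f s) w1"
    using W_lin[OF hf w(2) w(1), where a=1 and b="-1"] by simp
  moreover have "W f (\<lambda>s. h 1 * w2 s + (- h 1) * w1 s) = 0"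
    using W_lin[OF f(1) w(3) w(1), where a="h 1" and b="- h 1"] eq by simp
  ultimately show "W (\<lambda>s. h s * f s) w = W (\<lambda>s. h s * f s) w1" using a b by auto
qed

lemma dir:
  fixes \<xi> :: "'a::real_normed_vector \<Rightarrow> real"
  assumes der: "(\<xi> has_derivative D) (at p)"
    and le: "\<And>e. 0 < e \<Longrightarrow> e \<le> 1 \<Longrightarrow> \<xi> (p + e *\<^sub>R d) \<le> \<xi> p"
  shows "D d \<le> 0"
proof (rule ccontr)
  assume "\<not> D d \<le> 0"
  then have pos: "0 < D d" by simp
  have lin: "linear D" using der by (rule has_derivative_linear)
  have d1: "((\<lambda>e::real. p + e *\<^sub>R d) has_derivative (\<lambda>e. e *\<^sub>R d)) (at 0)"
    by (auto intro!: derivative_eq_intros)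
  have d2: "(\<xi> has_derivative D) (at ((\<lambda>e::real. p + e *\<^sub>R d) 0))" using der by simp
  have "((\<lambda>e. \<xi> (p + e *\<^sub>R d)) has_derivative (\<lambda>e. D (e *\<^sub>R d))) (at 0)"
    using has_derivative_compose[OF d1 d2] by simp
  moreover have "(\<lambda>e. D (e *\<^sub>R d)) = (*) (D d)"
    using linear_scale[OF lin] by (auto simp: mult.commute)
  ultimately have "DERIV (\<lambda>e. \<xi> (p + e *\<^sub>R d)) 0 :> D d"
    by (simp add: has_field_derivative_def)
  from DERIV_pos_inc_right[OF this pos] obtain \<delta> where \<delta>: "\<delta> > 0"
    "\<And>h. h > 0 \<Longrightarrow> h < \<delta> \<Longrightarrow> \<xi> (p + 0 *\<^sub>R d) < \<xi> (p + (0 + h) *\<^sub>R d)" by blast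
  define e where "e = min (\<delta>/2) 1"
  have "\<xi> p < \<xi> (p + e *\<^sub>R d)" using \<delta>(2)[of e] \<delta>(1) unfolding e_def by auto
  moreover have "\<xi> (p + e *\<^sub>R d) \<le> \<xi> p" using le[of e] \<delta>(1) unfolding e_def by auto
  ultimately show False by simp
qed

lemma lindec:
  fixes D :: "real \<times> (real^'m::finite) \<Rightarrow> real"
  assumes lin: "linear D"
  shows "D (a, x) = a * D (1, 0) + (\<Sum>m\<in>UNIV. x $ m * D (0, axis m 1))"
proof -
  have "(a, x) = a *\<^sub>R (1, 0) + (\<Sum>m\<in>UNIV. (x $ m) *\<^sub>R (0, axis m 1))"
  proof -
    have "(\<Sum>m\<in>UNIV. (x $ m) *\<^sub>R ((0::real), axis m (1::real))) = (0, \<Sum>m\<in>UNIV. x $ m *s axis m 1)"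
      by (simp add: prod_eq_iff fst_sum snd_sum scalar_mult_eq_scaleR)
    then show ?thesis by (simp add: basis_expansion)
  qed
  then have "D (a, x) = D (a *\<^sub>R (1, 0) + (\<Sum>m\<in>UNIV. (x $ m) *\<^sub>R (0, axis m 1)))" by simp
  also have "\<dots> = D (a *\<^sub>R (1, 0)) + D (\<Sum>m\<in>UNIV. (x $ m) *\<^sub>R (0, axis m 1))"
    by (rule linear_add[OF lin])
  also have "\<dots> = a * D (1, 0) + (\<Sum>m\<in>UNIV. x $ m * D (0, axis m 1))"
    by (simp only: linear_scale[OF lin] linear_sum[OF lin] o_def real_scaleR_def)
  finally show ?thesis .
qed



lemma W_lin3:
  assumes g: "set_integrable lebesgue {0..1} g" and w: "bw w1" "bw w2" "bw w3"
  shows "W g (\<lambda>s. a * w1 s + b * w2 s + c * w3 s) = a * W g w1 + b * W g w2 + c * W g w3"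
proof -
  have "W g (\<lambda>s. a * w1 s + b * w2 s + c * w3 s) = W g (\<lambda>s. 1 * (a * w1 s + b * w2 s) + c * w3 s)"
    by simp
  also have "\<dots> = 1 * W g (\<lambda>s. a * w1 s + b * w2 s) + c * W g w3"
    by (rule W_lin[OF g bw_lin[OF w(1) w(2)] w(3)])
  also have "\<dots> = a * W g w1 + b * W g w2 + c * W g w3"
    using W_lin[OF g w(1) w(2)] by simp
  finally show ?thesis .
qed

lemma bw_lin3: "bw w1 \<Longrightarrow> bw w2 \<Longrightarrow> bw w3 \<Longrightarrow> bw (\<lambda>s. a * w1 s + b * w2 s + c * w3 s)"
  using bw_lin[of "\<lambda>s. a * w1 s + b * w2 s" w3 1 c] bw_lin[of w1 w2 a b] by simp

lemma W_open:
  assumes g: "set_integrable lebesgue {0..1} g"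
  shows "W g (indicator {u<..}) = W g (indicator {u..})"
  unfolding W_def set_lebesgue_integral_def
proof (rule integral_cong_AE)
  have "{u<..} \<in> sets lebesgue" by (metis borel_open measurable_lborel2 open_greaterThan sets_completionI_sets sets_lborel)
  then have "bw (indicator {u<..})" by (rule bw_ind_set)
  from bw_int[OF g this] show "(\<lambda>x. indicator {0..1} x *\<^sub>R (indicator {u<..} x * g x)) \<in> borel_measurable lebesgue"
    unfolding set_integrable_def by (rule borel_measurable_integrable)
  from bw_int[OF g bw_ind] show "(\<lambda>x. indicator {0..1} x *\<^sub>R (indicator {u..} x * g x)) \<in> borel_measurable lebesgue"
    unfolding set_integrable_def by (rule borel_measurable_integrable)
  have "AE x in lebesgue. x \<noteq> (u::real)" by (simp add: AE_completion AE_lborel_singleton)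
  then show "AE x in lebesgue. indicator {0..1} x *\<^sub>R (indicator {u<..} x * g x) =
       indicator {0..1} x *\<^sub>R (indicator {u..} x * g x)"
    by eventually_elim (auto split: split_indicator)
qed

lemma xalloc_W: 
  "xalloc f \<mu> $ m = W (f m) (indicator {s \<in> {0..1}. \<mu> m s})"
  unfolding xalloc_def W_def by (auto intro!: set_lebesgue_integral_cong split: split_indicator)

lemma sbar_W: 
  "sbar h f \<mu> = (\<Sum>m\<in>UNIV. W (\<lambda>s. h s * f m s) (indicator {s \<in> {0..1}. \<mu> m s}))"
  unfolding sbar_def W_def by (auto intro!: sum.cong set_lebesgue_integral_cong split: split_indicator)

lemma borel_leb: "S \<in> sets borel \<Longrightarrow> S \<in> sets (lebesgue :: real measure)"
  by simp

lemma uopen_meas: "{x::real<..} \<in> sets lebesgue" by (intro borel_leb borel_open) auto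

locale stp =
  fixes \<xi> :: "real \<times> (real^'m::finite) \<Rightarrow> real" and h g :: "real \<Rightarrow> real" and q :: real 
    and f :: "'m \<Rightarrow> real \<Rightarrow> real"
  assumes q: "0 < q" "q < 1"
    and hc: "continuous_on {0..1} h" and hm: "strict_mono_on {0..1} h" and hnn: "\<forall>s\<in>{0..1}. 0 \<le> h s"
    and gm: "strict_mono g"
    and xmono: "\<forall>a a' x x'. a \<le> a' \<and> (\<forall>m. x $ m \<le> x' $ m) \<longrightarrow> \<xi> (a, x) \<le> \<xi> (a', x')"
    and xdiff: "\<forall>p. \<xi> differentiable (at p)"
    and ps_pos: "\<forall>p. partial_s \<xi> p > 0"
    and st: "is_state f"
begin

lemma fi: "set_integrable lebesgue {0..1} (f m)" using st unfolding is_state_def by auto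
lemma fnn: "s \<in> {0..1} \<Longrightarrow> 0 \<le> f m s" using st unfolding is_state_def by auto
lemma mass: "(\<Sum>m\<in>UNIV. (LINT s:{0..1}|lebesgue. f m s)) = 1" using st unfolding is_state_def by auto
lemma hfi: "set_integrable lebesgue {0..1} (\<lambda>s. h s * f m s)" 
  by (rule hf_int[OF fi fnn hc hm hnn])
lemma hfnn: "s \<in> {0..1} \<Longrightarrow> 0 \<le> h s * f m s" using fnn hnn by auto
lemma hle: "s \<in> {0..1} \<Longrightarrow> t \<in> {0..1} \<Longrightarrow> s \<le> t \<Longrightarrow> h s \<le> h t"
  using hm by (auto simp: strict_mono_on_less_eq)
lemma hlt: "s \<in> {0..1} \<Longrightarrow> t \<in> {0..1} \<Longrightarrow> s < t \<Longrightarrow> h s < h t"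
  using hm by (auto simp: strict_mono_on_def)

definition F where "F m t = W (f m) (indicator {t..})"
definition H where "H m t = W (\<lambda>s. h s * f m s) (indicator {t..})"
definition obj where "obj t = \<xi> (\<Sum>m\<in>UNIV. H m (t$m), \<chi> m. F m (t$m))"
definition K where "K = cbox 0 1 \<inter> (\<lambda>t. \<Sum>m\<in>UNIV. F m (t$m)) -` {..q}"

lemma Fc: "continuous_on {0..1} (F m)" unfolding F_def[abs_def] by (rule W_ind_cont[OF fi])
lemma Hc: "continuous_on {0..1} (H m)" unfolding H_def[abs_def] by (rule W_ind_cont[OF hfi])

lemma F_dec: "s \<in> {0..1} \<Longrightarrow> t \<in> {0..1} \<Longrightarrow> s \<le> t \<Longrightarrow> F m t \<le> F m s"
  unfolding F_def by (rule W_mono[OF fi fnn bw_ind bw_ind]) (auto split: split_indicator)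

lemma F1: "F m 1 = 0" unfolding F_def using W_ind(2)[OF fi, of 1] by simp
lemma F0: "F m 0 = (LINT s:{0..1}|lebesgue. f m s)" unfolding F_def using W_ind(1)[OF fi, of 0] by simp

lemma cont_comp: 
  assumes "continuous_on {0..1} G" shows "continuous_on (cbox 0 1) (\<lambda>t::real^'m. G (t$m))"
proof (rule continuous_on_compose2[OF assms])
  show "continuous_on (cbox 0 1) (\<lambda>t::real^'m. t $ m)" by (intro continuous_intros)
  show "(\<lambda>t::real^'m. t $ m) ` cbox 0 1 \<subseteq> {0..1}" by (auto simp: mem_box_cart)
qed

lemma K_compact: "compact K"
proof -
  have "closed K" unfolding K_def
    by (rule continuous_closed_preimage) (auto intro!: continuous_on_sum cont_comp Fc)
  then have "compact (cbox 0 1 \<inter> K)" by (intro compact_Int_closed) auto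
  moreover have "cbox 0 1 \<inter> K = K" unfolding K_def by auto
  ultimately show ?thesis by simp
qed

lemma one_K: "(1::real^'m) \<in> K"
  unfolding K_def using F1 q by (auto simp: mem_box_cart)

lemma K_mem: "t \<in> K \<longleftrightarrow> (\<forall>m. t$m \<in> {0..1}) \<and> (\<Sum>m\<in>UNIV. F m (t$m)) \<le> q"
  unfolding K_def by (auto simp: mem_box_cart)

lemma xi_cont: "continuous_on S \<xi>"
  using xdiff by (intro continuous_at_imp_continuous_on) (auto intro: differentiable_imp_continuous_within)

lemma obj_cont: "continuous_on K obj"
proof -
  have "continuous_on (cbox 0 1) obj" unfolding obj_def
    by (rule continuous_on_compose2[OF xi_cont[of UNIV]])
       (auto intro!: continuous_on_Pair continuous_on_sum continuous_on_vec_lambda cont_comp Fc Hc)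
  then show ?thesis by (rule continuous_on_subset) (auto simp: K_def)
qed

lemma ex_opt: "\<exists>t\<in>K. \<forall>t'\<in>K. obj t' \<le> obj t"
  using continuous_attains_sup[OF K_compact _ obj_cont] one_K by auto

definition ts where "ts = (SOME t. t \<in> K \<and> (\<forall>t'\<in>K. obj t' \<le> obj t))"

lemma ts: "ts \<in> K" "\<And>t'. t' \<in> K \<Longrightarrow> obj t' \<le> obj ts"
  using someI_ex[OF ex_opt[unfolded Bex_def]] unfolding ts_def by auto

lemma ts01: "ts$m \<in> {0..1}" using ts(1) K_mem by auto

definition "Sst = (\<Sum>m\<in>UNIV. H m (ts$m))"
definition "xst = (\<chi> m. F m (ts$m))"
definition "pst = (Sst, xst)"

lemma obj_ts: "obj ts = \<xi> pst" unfolding obj_def pst_def Sst_def xst_def by simp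

lemma OPT:
  assumes bwP: "\<And>m. bw (P m)" and b01: "\<And>m s. s \<in> {0..1} \<Longrightarrow> 0 \<le> P m s \<and> P m s \<le> 1"
    and sq: "(\<Sum>m\<in>UNIV. W (f m) (P m)) \<le> q"
  shows "\<xi> (\<Sum>m\<in>UNIV. W (\<lambda>s. h s * f m s) (P m), \<chi> m. W (f m) (P m)) \<le> \<xi> pst"
proof -
  have "\<forall>m. \<exists>t\<in>{0..1}. F m t = W (f m) (P m) \<and> W (\<lambda>s. h s * f m s) (P m) \<le> H m t"
    unfolding F_def H_def using rearr[OF fi fnn hc hm hnn bwP b01] by blast
  then obtain T where T: "\<And>m. T m \<in> {0..1}" "\<And>m. F m (T m) = W (f m) (P m)"
      "\<And>m. W (\<lambda>s. h s * f m s) (P m) \<le> H m (T m)"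
    by metis
  define tv where "tv = (\<chi> m. T m)"
  have "tv \<in> K" unfolding K_mem tv_def using T sq by auto
  then have "obj tv \<le> \<xi> pst" using ts(2) obj_ts by auto
  moreover have "\<xi> (\<Sum>m\<in>UNIV. W (\<lambda>s. h s * f m s) (P m), \<chi> m. W (f m) (P m)) \<le> obj tv"
    unfolding obj_def tv_def using T(2,3) by (intro xmono[rule_format] conjI sum_mono) auto
  ultimately show ?thesis by simp
qed

definition D where "D = frechet_derivative \<xi> (at pst)"
lemma hasD: "(\<xi> has_derivative D) (at pst)" unfolding D_def using xdiff frechet_derivative_works by blast
lemma linD: "linear D" using hasD by (rule has_derivative_linear)
definition "ps = D (1, 0)"
definition "px m = D (0, axis m 1)"
lemma ps_def': "ps = partial_s \<xi> pst" unfolding ps_def D_def partial_s_def by simp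
lemma px_def': "px m = partial_x \<xi> m pst" unfolding px_def D_def partial_x_def by simp
lemma ps_gt: "ps > 0" using ps_pos[rule_format, of pst] ps_def' by simp

lemma DER:
  assumes bwP: "\<And>m. bw (P m)" and b01: "\<And>m s. s \<in> {0..1} \<Longrightarrow> 0 \<le> P m s \<and> P m s \<le> 1"
    and sq: "(\<Sum>m\<in>UNIV. W (f m) (P m)) \<le> q"
  shows "ps * ((\<Sum>m\<in>UNIV. W (\<lambda>s. h s * f m s) (P m)) - Sst) + 
         (\<Sum>m\<in>UNIV. (W (f m) (P m) - F m (ts$m)) * px m) \<le> 0"
proof -
  define d where "d = ((\<Sum>m\<in>UNIV. W (\<lambda>s. h s * f m s) (P m)) - Sst, \<chi> m. W (f m) (P m) - F m (ts$m))"
  have "D d \<le> 0"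
  proof (rule dir[OF hasD])
    fix e :: real assume e: "0 < e" "e \<le> 1"
    define Pe where "Pe m = (\<lambda>s. (1 - e) * indicator {ts$m..} s + e * P m s)" for m
    have bwPe: "bw (Pe m)" for m unfolding Pe_def by (rule bw_lin[OF bw_ind bwP])
    have WPe: "W g (Pe m) = (1 - e) * W g (indicator {ts$m..}) + e * W g (P m)"
      if "set_integrable lebesgue {0..1} g" for g m
      unfolding Pe_def by (rule W_lin[OF that bw_ind bwP])
    have b: "0 \<le> Pe m s \<and> Pe m s \<le> 1" if "s \<in> {0..1}" for m s
    proof -
      have "0 \<le> P m s" "P m s \<le> 1" using b01[OF that] by auto
      moreover have "(0::real) \<le> indicator {ts$m..} s" "indicator {ts$m..} s \<le> (1::real)"
        by (auto split: split_indicator)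
      ultimately have "0 \<le> (1 - e) * indicator {ts$m..} s + e * P m s"
        "(1 - e) * indicator {ts$m..} s + e * P m s \<le> (1 - e) * 1 + e * 1"
        using e by (intro add_mono mult_left_mono add_nonneg_nonneg mult_nonneg_nonneg; simp)+
      then show ?thesis unfolding Pe_def by simp
    qed
    have "(\<Sum>m\<in>UNIV. W (f m) (Pe m)) = (1 - e) * (\<Sum>m\<in>UNIV. F m (ts$m)) + e * (\<Sum>m\<in>UNIV. W (f m) (P m))"
      using WPe[OF fi] unfolding F_def by (simp add: sum.distrib sum_distrib_left)
    also have "\<dots> \<le> (1 - e) * q + e * q"
      using ts(1) sq e unfolding K_mem by (intro add_mono mult_left_mono) auto
    finally have "(\<Sum>m\<in>UNIV. W (f m) (Pe m)) \<le> q" by (simp add: algebra_simps)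
    from OPT[OF bwPe b this]
    have "\<xi> (\<Sum>m\<in>UNIV. W (\<lambda>s. h s * f m s) (Pe m), \<chi> m. W (f m) (Pe m)) \<le> \<xi> pst" .
    moreover have "pst + e *\<^sub>R d = (\<Sum>m\<in>UNIV. W (\<lambda>s. h s * f m s) (Pe m), \<chi> m. W (f m) (Pe m))"
    proof -
      have A: "W (f m) (Pe m) = (1-e) * F m (ts$m) + e * W (f m) (P m)" for m
        using WPe[OF fi] unfolding F_def by simp
      have B: "W (\<lambda>s. h s * f m s) (Pe m) = (1-e) * H m (ts$m) + e * W (\<lambda>s. h s * f m s) (P m)" for m
        using WPe[OF hfi] unfolding H_def by simp
      have S: "(\<Sum>m\<in>UNIV. W (\<lambda>s. h s * f m s) (Pe m)) = (1-e) * Sst + e * (\<Sum>m\<in>UNIV. W (\<lambda>s. h s * f m s) (P m))"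
        by (simp add: B sum.distrib sum_distrib_left Sst_def)
      have "pst + e *\<^sub>R d = (Sst + e * ((\<Sum>m\<in>UNIV. W (\<lambda>s. h s * f m s) (P m)) - Sst),
               \<chi> m. F m (ts$m) + e * (W (f m) (P m) - F m (ts$m)))"
        unfolding pst_def d_def xst_def by (simp add: vec_eq_iff)
      moreover have "(\<lambda>m. F m (ts$m) + e * (W (f m) (P m) - F m (ts$m))) = (\<lambda>m. W (f m) (Pe m))"
        by (rule ext) (simp add: A algebra_simps)
      moreover have "Sst + e * ((\<Sum>m\<in>UNIV. W (\<lambda>s. h s * f m s) (P m)) - Sst) =
          (\<Sum>m\<in>UNIV. W (\<lambda>s. h s * f m s) (Pe m))"
        unfolding S by (simp add: algebra_simps)
      ultimately show ?thesis by simp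

    qed
    ultimately show "\<xi> (pst + e *\<^sub>R d) \<le> \<xi> pst" by simp
  qed
  moreover have "D d = fst d * D (1,0) + (\<Sum>m\<in>UNIV. snd d $ m * D (0, axis m 1))"
    using lindec[OF linD, of "fst d" "snd d"] by simp
  ultimately show ?thesis unfolding ps_def px_def by (simp add: d_def mult.commute)
qed

lemma px_nn: "px m \<ge> 0"
proof -
  have "((\<lambda>z. - \<xi> z) has_derivative (\<lambda>z. - D z)) (at pst)" using hasD by (rule has_derivative_minus)
  then have "- D (0, axis m 1) \<le> 0"
  proof (rule dir)
    fix e :: real assume e: "0 < e" "e \<le> 1"
    have "\<xi> pst \<le> \<xi> (pst + e *\<^sub>R (0, axis m 1))"
      unfolding pst_def using xmono e by (auto simp: axis_def)
    then show "- \<xi> (pst + e *\<^sub>R (0, axis m 1)) \<le> - \<xi> pst" by simp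
  qed
  then show ?thesis unfolding px_def by simp
qed

definition "c m = px m / ps"
definition "v m s = h s + c m"
lemma psc: "ps * c m = px m" unfolding c_def using ps_gt by simp

definition "Lv m = {s \<in> {0..1}. F m s = F m (ts$m)}"
definition "l m = Inf (Lv m)"
definition "u m = Sup (Lv m)"

lemma Lv_closed: "closed (Lv m)" unfolding Lv_def
  by (rule continuous_closed_preimage_constant[OF Fc]) auto

lemma Lv_props: "l m \<in> Lv m" "u m \<in> Lv m" "s \<in> Lv m \<Longrightarrow> l m \<le> s" "s \<in> Lv m \<Longrightarrow> s \<le> u m"
proof -
  have ne: "Lv m \<noteq> {}" using ts01 unfolding Lv_def by auto
  have bb: "bdd_below (Lv m)" "bdd_above (Lv m)" unfolding Lv_def
    by (auto intro!: bdd_belowI[of _ 0] bdd_aboveI[of _ 1])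
  show "l m \<in> Lv m" unfolding l_def by (rule closed_contains_Inf[OF ne bb(1) Lv_closed])
  show "u m \<in> Lv m" unfolding u_def by (rule closed_contains_Sup[OF ne bb(2) Lv_closed])
  show "s \<in> Lv m \<Longrightarrow> l m \<le> s" unfolding l_def by (erule cInf_lower[OF _ bb(1)])
  show "s \<in> Lv m \<Longrightarrow> s \<le> u m" unfolding u_def by (erule cSup_upper[OF _ bb(2)])
qed

lemma lu01: "l m \<in> {0..1}" "u m \<in> {0..1}" "F m (l m) = F m (ts$m)" "F m (u m) = F m (ts$m)"
  using Lv_props(1,2) unfolding Lv_def by auto

lemma l_ts: "l m \<le> ts$m" and ts_u: "ts$m \<le> u m"
  using Lv_props(3,4)[of "ts$m" m] ts01 unfolding Lv_def by auto

lemma below_l: "s \<in> {0..1} \<Longrightarrow> s < l m \<Longrightarrow> F m (l m) < F m s"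
proof -
  assume s: "s \<in> {0..1}" "s < l m"
  have "F m (l m) \<le> F m s" using F_dec[OF s(1) lu01(1)] s by simp
  moreover have "s \<notin> Lv m" using Lv_props(3)[of s m] s by auto
  ultimately show ?thesis using s lu01(3) unfolding Lv_def by auto
qed

lemma above_u: "s \<in> {0..1} \<Longrightarrow> u m < s \<Longrightarrow> F m s < F m (u m)"
proof -
  assume s: "s \<in> {0..1}" "u m < s"
  have "F m s \<le> F m (u m)" using F_dec[OF lu01(2) s(1)] s by simp
  moreover have "s \<notin> Lv m" using Lv_props(4)[of s m] s by auto
  ultimately show ?thesis using s lu01(4) unfolding Lv_def by auto
qed

lemma F_diff: "F m a - F m b = W (f m) (\<lambda>s. 1 * indicator {a..} s + (-1) * indicator {b..} s)"
  unfolding F_def using W_lin[OF fi bw_ind bw_ind, where a=1 and b="-1"] by simp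
lemma H_diff: "H m a - H m b = W (\<lambda>s. h s * f m s) (\<lambda>s. 1 * indicator {a..} s + (-1) * indicator {b..} s)"
  unfolding H_def using W_lin[OF hfi bw_ind bw_ind, where a=1 and b="-1"] by simp

lemma H_lower:
  assumes ab: "a \<in> {0..1}" "b \<in> {0..1}" "a \<le> b" and k: "\<And>s. s \<in> {a..<b} \<Longrightarrow> k \<le> h s"
  shows "k * (F m a - F m b) \<le> H m a - H m b"
proof -
  have "W (f m) (\<lambda>s. k * indicator {a..} s + (-k) * indicator {b..} s) \<le>
        W (\<lambda>s. h s * f m s) (\<lambda>s. 1 * indicator {a..} s + (-1) * indicator {b..} s)"
  proof (rule W_mono2[OF fi hfi bw_lin[OF bw_ind bw_ind] bw_lin[OF bw_ind bw_ind]])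
    fix s :: real assume s: "s \<in> {0..1}"
    show "(k * indicator {a..} s + - k * indicator {b..} s) * f m s
          \<le> (1 * indicator {a..} s + - 1 * indicator {b..} s) * (h s * f m s)"
    proof (cases "a \<le> s \<and> s < b")
      case True
      then show ?thesis using k[of s] fnn[OF s] by (auto intro: mult_right_mono split: split_indicator)
    next
      case False
      then show ?thesis using ab by (auto split: split_indicator)
    qed
  qed
  moreover have e1: "W (f m) (\<lambda>s. k * indicator {a..} s + (-k) * indicator {b..} s) = k * (F m a - F m b)"
    unfolding F_def by (subst W_lin[OF fi bw_ind bw_ind]) (simp add: algebra_simps)
  moreover have e2: "W (\<lambda>s. h s * f m s) (\<lambda>s. 1 * indicator {a..} s + (-1) * indicator {b..} s) = H m a - H m b"
    unfolding H_def by (subst W_lin[OF hfi bw_ind bw_ind]) simp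
  ultimately show ?thesis by simp
qed

lemma H_upper:
  assumes ab: "a \<in> {0..1}" "b \<in> {0..1}" "a \<le> b" and k: "\<And>s. s \<in> {a..<b} \<Longrightarrow> h s \<le> k"
  shows "H m a - H m b \<le> k * (F m a - F m b)"
proof -
  have "W (\<lambda>s. h s * f m s) (\<lambda>s. 1 * indicator {a..} s + (-1) * indicator {b..} s) \<le>
        W (f m) (\<lambda>s. k * indicator {a..} s + (-k) * indicator {b..} s)"
  proof (rule W_mono2[OF hfi fi bw_lin[OF bw_ind bw_ind] bw_lin[OF bw_ind bw_ind]])
    fix s :: real assume s: "s \<in> {0..1}"
    show "(1 * indicator {a..} s + - 1 * indicator {b..} s) * (h s * f m s) \<le>
          (k * indicator {a..} s + - k * indicator {b..} s) * f m s"
    proof (cases "a \<le> s \<and> s < b")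
      case True
      then show ?thesis using k[of s] fnn[OF s] by (auto intro: mult_right_mono split: split_indicator)
    next
      case False
      then show ?thesis using ab by (auto split: split_indicator)
    qed
  qed
  moreover have e1: "W (f m) (\<lambda>s. k * indicator {a..} s + (-k) * indicator {b..} s) = k * (F m a - F m b)"
    unfolding F_def by (subst W_lin[OF fi bw_ind bw_ind]) (simp add: algebra_simps)
  moreover have e2: "W (\<lambda>s. h s * f m s) (\<lambda>s. 1 * indicator {a..} s + (-1) * indicator {b..} s) = H m a - H m b"
    unfolding H_def by (subst W_lin[OF hfi bw_ind bw_ind]) simp
  ultimately show ?thesis by simp
qed

lemma sum2: 
  fixes \<phi> :: "'m \<Rightarrow> real"
  assumes "m \<noteq> m'" "\<And>k. k \<noteq> m \<Longrightarrow> k \<noteq> m' \<Longrightarrow> \<phi> k = 0"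
  shows "(\<Sum>k\<in>UNIV. \<phi> k) = \<phi> m + \<phi> m'"
proof -
  have "(\<Sum>k\<in>UNIV. \<phi> k) = (\<Sum>k\<in>{m,m'}. \<phi> k)"
    by (rule sum.mono_neutral_right) (use assms in auto)
  then show ?thesis using assms by simp
qed

lemma sum1: 
  fixes \<phi> :: "'m \<Rightarrow> real"
  assumes "\<And>k. k \<noteq> m \<Longrightarrow> \<phi> k = 0"
  shows "(\<Sum>k\<in>UNIV. \<phi> k) = \<phi> m"
proof -
  have "(\<Sum>k\<in>UNIV. \<phi> k) = (\<Sum>k\<in>{m}. \<phi> k)"
    by (rule sum.mono_neutral_right) (use assms in auto)
  then show ?thesis by simp
qed

lemma pert:
  fixes A B L1 L2 :: "'m \<Rightarrow> real"
  defines "P \<equiv> \<lambda>k s. 1 * indicator {ts$k..} s + A k * indicator {L1 k..} s + B k * indicator {L2 k..} s"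
  assumes b01: "\<And>k s. s \<in> {0..1} \<Longrightarrow> 0 \<le> P k s \<and> P k s \<le> 1"
    and sq: "(\<Sum>k\<in>UNIV. F k (ts$k)) + (\<Sum>k\<in>UNIV. A k * F k (L1 k) + B k * F k (L2 k)) \<le> q"
  shows "ps * (\<Sum>k\<in>UNIV. A k * H k (L1 k) + B k * H k (L2 k)) +
         (\<Sum>k\<in>UNIV. (A k * F k (L1 k) + B k * F k (L2 k)) * px k) \<le> 0"
proof -
  have bwP: "bw (P k)" for k unfolding P_def by (rule bw_lin3[OF bw_ind bw_ind bw_ind])
  have WF: "W (f k) (P k) = F k (ts$k) + (A k * F k (L1 k) + B k * F k (L2 k))" for k
    unfolding P_def F_def by (subst W_lin3[OF fi bw_ind bw_ind bw_ind]) simp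
  have WH: "W (\<lambda>s. h s * f k s) (P k) = H k (ts$k) + (A k * H k (L1 k) + B k * H k (L2 k))" for k
    unfolding P_def H_def by (subst W_lin3[OF hfi bw_ind bw_ind bw_ind]) simp
  have "(\<Sum>k\<in>UNIV. W (f k) (P k)) = (\<Sum>k\<in>UNIV. F k (ts$k)) + (\<Sum>k\<in>UNIV. A k * F k (L1 k) + B k * F k (L2 k))"
    unfolding WF by (rule sum.distrib)
  also have "\<dots> \<le> q" using sq by auto
  finally have "(\<Sum>k\<in>UNIV. W (f k) (P k)) \<le> q" .
  from DER[OF bwP b01 this] show ?thesis unfolding WH WF Sst_def by (simp add: sum.distrib)
qed

lemma PAIR:
  assumes lpos: "0 < l m" and ulo: "u m' < 1"
  shows "v m (l m) \<le> v m' (u m')"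
proof (cases "m = m'")
  case True
  have "l m \<le> u m" using l_ts[of m] ts_u[of m] by linarith
  then have "h (l m) \<le> h (u m)" using hle[OF lu01(1) lu01(2)] by blast
  then show ?thesis using True unfolding v_def by simp
next
  case False
  show ?thesis
  proof (rule ccontr)
    assume neg: "\<not> v m (l m) \<le> v m' (u m')"
    define gap where "gap = v m (l m) - v m' (u m')"
    have gap: "gap > 0" using neg unfolding gap_def by simp
    obtain d1 where d1: "d1 > 0" "\<And>x'. x' \<in> {0..1} \<Longrightarrow> dist x' (l m) < d1 \<Longrightarrow> dist (h x') (h (l m)) < gap/3"
      using hc lu01(1)[of m] gap unfolding continuous_on_iff by (metis divide_pos_pos zero_less_numeral)
    obtain d2 where d2: "d2 > 0" "\<And>x'. x' \<in> {0..1} \<Longrightarrow> dist x' (u m') < d2 \<Longrightarrow> dist (h x') (h (u m')) < gap/3"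
      using hc lu01(2)[of m'] gap unfolding continuous_on_iff by (metis divide_pos_pos zero_less_numeral)
    define a0 where "a0 = max (l m / 2) (l m - d1/2)"
    define b0 where "b0 = min ((1 + u m')/2) (u m' + d2/2)"
    have a0: "0 < a0" "a0 < l m" "a0 \<in> {0..1}" "l m - a0 < d1"
      using lpos d1(1) lu01(1)[of m] unfolding a0_def by auto
    have b0: "u m' < b0" "b0 \<le> 1" "b0 \<in> {0..1}" "b0 - u m' < d2"
      using ulo d2(1) lu01(2)[of m'] unfolding b0_def by (auto simp: min_def)
    define P where "P = F m a0 - F m (l m)"
    define Q where "Q = F m' (u m') - F m' b0"
    have P: "P > 0" unfolding P_def using below_l[OF a0(3) a0(2)] by simp
    have Q: "Q > 0" unfolding Q_def using above_u[OF b0(3) b0(1)] by simp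
    define \<rho> where "\<rho> = min P Q"
    define \<alpha> where "\<alpha> = \<rho> / P"
    define \<beta> where "\<beta> = \<rho> / Q"
    have \<rho>: "\<rho> > 0" using P Q unfolding \<rho>_def by simp
    have \<alpha>: "0 < \<alpha>" "\<alpha> \<le> 1" "\<alpha> * P = \<rho>" using P \<rho> unfolding \<alpha>_def \<rho>_def by auto
    have \<beta>: "0 < \<beta>" "\<beta> \<le> 1" "\<beta> * Q = \<rho>" using Q \<rho> unfolding \<beta>_def \<rho>_def by auto
    define kA where "kA = h (l m) - gap/3"
    define kB where "kB = h (u m') + gap/3"
    have EA: "kA * P \<le> H m a0 - H m (l m)" unfolding P_def
    proof (rule H_lower[OF a0(3) lu01(1)])
      show "a0 \<le> l m" using a0 by simp
      fix s assume s: "s \<in> {a0..<l m}"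
      then have "s \<in> {0..1}" using a0 lu01(1)[of m] by auto
      moreover have "dist s (l m) < d1" using s a0 by (auto simp: dist_real_def)
      ultimately have "dist (h s) (h (l m)) < gap/3" using d1 by blast
      then show "kA \<le> h s" unfolding kA_def dist_real_def by linarith
    qed
    have EB: "H m' (u m') - H m' b0 \<le> kB * Q" unfolding Q_def
    proof (rule H_upper[OF lu01(2) b0(3)])
      show "u m' \<le> b0" using b0 by simp
      fix s assume s: "s \<in> {u m'..<b0}"
      then have "s \<in> {0..1}" using b0 lu01(2)[of m'] by auto
      moreover have "dist s (u m') < d2" using s b0 by (auto simp: dist_real_def)
      ultimately have "dist (h s) (h (u m')) < gap/3" using d2 by blast
      then show "h s \<le> kB" unfolding kB_def dist_real_def by linarith
    qed
    define A where "A k = (if k = m then \<alpha> else if k = m' then - \<beta> else 0)" for k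
    define B where "B k = (if k = m then - \<alpha> else if k = m' then \<beta> else 0)" for k
    define L1 where "L1 k = (if k = m then a0 else if k = m' then u m' else 0)" for k
    define L2 where "L2 k = (if k = m then l m else if k = m' then b0 else 0)" for k
    have tsm: "a0 < ts$m" using a0 l_ts[of m] by simp
    have tsm': "ts$m' \<le> u m'" using ts_u by simp
    have b01: "0 \<le> 1 * indicator {ts$k..} s + A k * indicator {L1 k..} s + B k * indicator {L2 k..} s \<and>
               1 * indicator {ts$k..} s + A k * indicator {L1 k..} s + B k * indicator {L2 k..} s \<le> 1"
      if "s \<in> {0..1}" for k s
    proof -
      consider "k = m" | "k = m'" | "k \<noteq> m" "k \<noteq> m'" by blast
      then show ?thesis
      proof cases
        case 1
        then show ?thesis using \<alpha> a0 tsm l_ts[of m] False unfolding A_def B_def L1_def L2_def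
          by (auto split: split_indicator)
      next
        case 2
        then show ?thesis using \<beta> b0 tsm' False unfolding A_def B_def L1_def L2_def
          by (auto split: split_indicator)
      next
        case 3
        then show ?thesis unfolding A_def B_def L1_def L2_def by (auto split: split_indicator)
      qed
    qed
    have sF: "(\<Sum>k\<in>UNIV. A k * F k (L1 k) + B k * F k (L2 k)) = \<alpha> * P - \<beta> * Q"
      by (subst sum2[OF False]) (auto simp: A_def B_def L1_def L2_def P_def Q_def algebra_simps False not_sym[OF False])
    have sq: "(\<Sum>k\<in>UNIV. F k (ts$k)) + (\<Sum>k\<in>UNIV. A k * F k (L1 k) + B k * F k (L2 k)) \<le> q"
      using ts(1) unfolding K_mem sF \<alpha>(3) \<beta>(3) by simp
    have sH: "(\<Sum>k\<in>UNIV. A k * H k (L1 k) + B k * H k (L2 k)) = \<alpha> * (H m a0 - H m (l m)) - \<beta> * (H m' (u m') - H m' b0)"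
      by (subst sum2[OF False]) (auto simp: A_def B_def L1_def L2_def algebra_simps False not_sym[OF False])
    have sP0: "(\<Sum>k\<in>UNIV. (A k * F k (L1 k) + B k * F k (L2 k)) * px k) = (\<alpha> * P) * px m - (\<beta> * Q) * px m'"
      by (subst sum2[OF False]) (auto simp: A_def B_def L1_def L2_def algebra_simps False not_sym[OF False]
          P_def Q_def)
    have sP: "(\<Sum>k\<in>UNIV. (A k * F k (L1 k) + B k * F k (L2 k)) * px k) = \<rho> * px m - \<rho> * px m'"
      unfolding sP0 \<alpha>(3) \<beta>(3) ..
    have main: "ps * (\<alpha> * (H m a0 - H m (l m)) - \<beta> * (H m' (u m') - H m' b0)) + (\<rho> * px m - \<rho> * px m') \<le> 0"
      using pert[OF b01 sq] unfolding sH sP .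
    have i1: "\<alpha> * (kA * P) \<le> \<alpha> * (H m a0 - H m (l m))" using EA \<alpha> by (intro mult_left_mono) auto
    have i2: "\<beta> * (H m' (u m') - H m' b0) \<le> \<beta> * (kB * Q)" using EB \<beta> by (intro mult_left_mono) auto
    have e1: "\<alpha> * (kA * P) = kA * \<rho>" and e2: "\<beta> * (kB * Q) = kB * \<rho>"
      using \<alpha>(3) \<beta>(3) by (auto simp: algebra_simps)
    have i1': "kA * \<rho> \<le> \<alpha> * (H m a0 - H m (l m))" using i1 unfolding e1 .
    have i2': "\<beta> * (H m' (u m') - H m' b0) \<le> kB * \<rho>" using i2 unfolding e2 .
    have i3: "kA * \<rho> - kB * \<rho> \<le> \<alpha> * (H m a0 - H m (l m)) - \<beta> * (H m' (u m') - H m' b0)"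
      using i1' i2' by linarith
    have i4: "ps * (kA * \<rho> - kB * \<rho>) \<le> ps * (\<alpha> * (H m a0 - H m (l m)) - \<beta> * (H m' (u m') - H m' b0))"
      using i3 ps_gt by (intro mult_left_mono) auto
    have "ps * (kA * \<rho> - kB * \<rho>) = ps * (gap/3) * \<rho> + (ps * c m') * \<rho> - (ps * c m) * \<rho>"
      unfolding kA_def kB_def gap_def v_def by (simp add: field_simps)
    then have i5: "ps * (kA * \<rho> - kB * \<rho>) = ps * (gap/3) * \<rho> + px m' * \<rho> - px m * \<rho>"
      unfolding psc .
    have "0 < ps * (gap/3) * \<rho>" using ps_gt gap \<rho> by simp
    then show False using main i4 i5 by (simp add: algebra_simps)
  qed
qed

lemma SUMQ: "(\<Sum>m\<in>UNIV. F m (ts$m)) = q"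
proof (rule ccontr)
  assume ne: "\<not> ?thesis"
  have le: "(\<Sum>m\<in>UNIV. F m (ts$m)) \<le> q" using ts(1) unfolding K_mem by simp
  then have lt: "(\<Sum>m\<in>UNIV. F m (ts$m)) < q" using ne by simp
  obtain m where m: "F m (ts$m) < F m 0"
  proof (rule ccontr)
    assume "\<not> thesis"
    then have "\<forall>m. F m 0 \<le> F m (ts$m)" using that by (meson not_le)
    then have "(\<Sum>m\<in>UNIV. F m 0) \<le> (\<Sum>m\<in>UNIV. F m (ts$m))" by (intro sum_mono) auto
    moreover have "(\<Sum>m\<in>UNIV. F m 0) = 1" using mass F0 by simp
    ultimately show False using lt q by simp
  qed
  have lpos: "0 < l m"
  proof -
    have "l m \<noteq> 0" using m lu01(3)[of m] by auto
    then show ?thesis using lu01(1)[of m] by simp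
  qed
  define a0 where "a0 = l m / 2"
  have a0: "0 < a0" "a0 < l m" "a0 \<in> {0..1}" using lpos lu01(1)[of m] unfolding a0_def by auto
  define P where "P = F m a0 - F m (l m)"
  have P: "P > 0" unfolding P_def using below_l[OF a0(3) a0(2)] by simp
  define gq where "gq = q - (\<Sum>m\<in>UNIV. F m (ts$m))"
  have gq: "gq > 0" using lt unfolding gq_def by simp
  define \<alpha> where "\<alpha> = min 1 (gq / P)"
  have \<alpha>: "0 < \<alpha>" "\<alpha> \<le> 1" "\<alpha> * P \<le> gq" using P gq unfolding \<alpha>_def
    by (auto simp: min_def field_simps)
  have EA: "h a0 * P \<le> H m a0 - H m (l m)" unfolding P_def
  proof (rule H_lower[OF a0(3) lu01(1)])
    show "a0 \<le> l m" using a0 by simp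
    fix s assume s: "s \<in> {a0..<l m}"
    then have "s \<in> {0..1}" using a0 lu01(1)[of m] by auto
    then show "h a0 \<le> h s" using hle[OF a0(3)] s by auto
  qed
  have "h 0 < h a0" by (rule hlt) (use a0 in auto)
  moreover have "0 \<le> h 0" using hnn by auto
  ultimately have ha0: "0 < h a0" by linarith
  define A where "A k = (if k = m then \<alpha> else 0)" for k
  define B where "B k = (if k = m then - \<alpha> else 0)" for k
  define L1 where "L1 (k::'m) = a0" for k
  define L2 where "L2 (k::'m) = l m" for k
  have tsm: "a0 < ts$m" using a0 l_ts[of m] by simp
  have b01: "0 \<le> 1 * indicator {ts$k..} s + A k * indicator {L1 k..} s + B k * indicator {L2 k..} s \<and>
             1 * indicator {ts$k..} s + A k * indicator {L1 k..} s + B k * indicator {L2 k..} s \<le> 1"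
    if "s \<in> {0..1}" for k s
  proof (cases "k = m")
    case True
    then show ?thesis using \<alpha> a0 tsm l_ts[of m] unfolding A_def B_def L1_def L2_def
      by (auto split: split_indicator)
  next
    case False
    then show ?thesis unfolding A_def B_def L1_def L2_def by (auto split: split_indicator)
  qed
  have sF: "(\<Sum>k\<in>UNIV. A k * F k (L1 k) + B k * F k (L2 k)) = \<alpha> * P"
    by (subst sum1[where m=m]) (auto simp: A_def B_def L1_def L2_def P_def algebra_simps)
  have sq: "(\<Sum>k\<in>UNIV. F k (ts$k)) + (\<Sum>k\<in>UNIV. A k * F k (L1 k) + B k * F k (L2 k)) \<le> q"
    using \<alpha>(3) unfolding sF gq_def by simp
  have sH: "(\<Sum>k\<in>UNIV. A k * H k (L1 k) + B k * H k (L2 k)) = \<alpha> * (H m a0 - H m (l m))"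
    by (subst sum1[where m=m]) (auto simp: A_def B_def L1_def L2_def algebra_simps)
  have sP: "(\<Sum>k\<in>UNIV. (A k * F k (L1 k) + B k * F k (L2 k)) * px k) = \<alpha> * P * px m"
    by (subst sum1[where m=m]) (auto simp: A_def B_def L1_def L2_def P_def algebra_simps)
  have main: "ps * (\<alpha> * (H m a0 - H m (l m))) + \<alpha> * P * px m \<le> 0"
    using pert[OF b01 sq] unfolding sH sP .
  have "0 < \<alpha> * (h a0 * P)" using \<alpha> ha0 P by simp
  also have "\<alpha> * (h a0 * P) \<le> \<alpha> * (H m a0 - H m (l m))" using EA \<alpha> by (intro mult_left_mono) auto
  finally have "0 < ps * (\<alpha> * (H m a0 - H m (l m)))" using ps_gt by simp
  moreover have "0 \<le> \<alpha> * P * px m" using \<alpha> P px_nn[of m] by simp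
  ultimately show False using main by simp
qed

definition "Lo = (\<lambda>m. v m (l m)) ` {m. 0 < l m}"
definition "Up = (\<lambda>m. v m (u m)) ` {m. u m < 1}"
definition "lam = (if Lo \<noteq> {} then Max Lo else if Up \<noteq> {} then Min Up else 0)"

lemma lam_lo: "0 < l m \<Longrightarrow> v m (l m) \<le> lam"
proof -
  assume a: "0 < l m"
  then have "v m (l m) \<in> Lo" "Lo \<noteq> {}" unfolding Lo_def by auto
  moreover have "finite Lo" unfolding Lo_def by simp
  ultimately show ?thesis unfolding lam_def by simp
qed

lemma lam_up: "u m < 1 \<Longrightarrow> lam \<le> v m (u m)"
proof -
  assume a: "u m < 1"
  then have up: "v m (u m) \<in> Up" "Up \<noteq> {}" unfolding Up_def by auto
  have fin: "finite Lo" "finite Up" unfolding Lo_def Up_def by simp_all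
  show ?thesis
  proof (cases "Lo = {}")
    case True
    then show ?thesis using up fin unfolding lam_def by simp
  next
    case False
    then have "Max Lo \<in> Lo" using fin by simp
    then obtain m' where "0 < l m'" "Max Lo = v m' (l m')" unfolding Lo_def by auto
    then have "Max Lo \<le> v m (u m)" using PAIR[of m' m] a by simp
    then show ?thesis using False unfolding lam_def by simp
  qed
qed

definition "mu = (\<lambda>m s. lam < v m s)"
definition "E m = {s \<in> {0..1}. mu m s}"


lemma E_meas: "E m \<in> sets lebesgue"
proof -
  have "openin (top_of_set {0..1}) ({0..1} \<inter> h -` {lam - c m<..})"
    by (rule continuous_openin_preimage_gen[OF hc]) (rule open_greaterThan)
  then obtain T where T: "open T" "{0..1} \<inter> h -` {lam - c m<..} = {0..1} \<inter> T"
    unfolding openin_open by blast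
  have eq: "E m = {0..1} \<inter> h -` {lam - c m<..}" 
  proof (rule set_eqI)
    fix s show "s \<in> E m \<longleftrightarrow> s \<in> {0..1} \<inter> h -` {lam - c m<..}"
      unfolding E_def mu_def v_def by (simp add: algebra_simps)
  qed
  have "{0..1} \<inter> T \<in> sets lebesgue" 
    using T(1) by (intro borel_leb sets.Int borel_closed borel_open) (rule closed_atLeastAtMost)
  then show ?thesis unfolding eq T(2) .
qed

lemma sandE: "W (f m) (indicator (E m)) = F m (ts$m)"
   "W (\<lambda>s. h s * f m s) (indicator (E m)) = W (\<lambda>s. h s * f m s) (indicator {u m<..})"
proof -
  have le: "0 \<le> (indicator {u m<..} s :: real) \<and> (indicator {u m<..} s :: real) \<le> indicator (E m) s \<and>
        (indicator (E m) s :: real) \<le> indicator {l m..} s" if s: "s \<in> {0..1}" for s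
  proof -
    have 1: "s \<in> E m" if "u m < s"
    proof -
      have "u m < 1" using that s by auto
      then have "lam \<le> v m (u m)" by (rule lam_up)
      also have "v m (u m) < v m s" unfolding v_def using hlt[OF lu01(2) s that] by simp
      finally show ?thesis unfolding E_def mu_def using s by simp
    qed
    have 2: "l m \<le> s" if "s \<in> E m"
    proof (cases "l m = 0")
      case True then show ?thesis using s by simp
    next
      case False
      then have "0 < l m" using lu01(1)[of m] by simp
      then have "v m (l m) \<le> lam" by (rule lam_lo)
      also have "lam < v m s" using that unfolding E_def mu_def by simp
      finally have "h (l m) < h s" unfolding v_def by simp
      then show ?thesis using hle[OF s lu01(1)] by (meson not_le less_le_not_le)
    qed
    show ?thesis using 1 2 by (auto split: split_indicator)
  qed
  have eq: "W (f m) (indicator {u m<..}) = W (f m) (indicator {l m..})"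
    using W_open[OF fi] lu01(3,4) unfolding F_def by simp
  have r: "W (f m) (indicator (E m)) = W (f m) (indicator {u m<..})"
    "W (\<lambda>s. h s * f m s) (indicator (E m)) = W (\<lambda>s. h s * f m s) (indicator {u m<..})"
    using sandwich[OF fi fnn hc hm hnn bw_ind_set[OF uopen_meas] bw_ind_set[OF E_meas] bw_ind le eq] by auto
  show "W (f m) (indicator (E m)) = F m (ts$m)" using r(1) W_open[OF fi] lu01(4) unfolding F_def by simp
  show "W (\<lambda>s. h s * f m s) (indicator (E m)) = W (\<lambda>s. h s * f m s) (indicator {u m<..})" by (rule r(2))
qed

lemma sandH: 
  assumes "t \<in> {l m..u m}"
  shows "H m t = W (\<lambda>s. h s * f m s) (indicator {u m<..})"
proof -
  have t01: "t \<in> {0..1}" using assms lu01(1,2)[of m] by auto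
  have le: "0 \<le> (indicator {u m<..} s :: real) \<and> (indicator {u m<..} s :: real) \<le> indicator {t..} s \<and>
        (indicator {t..} s :: real) \<le> indicator {l m..} s" if s: "s \<in> {0..1}" for s
    using assms by (auto split: split_indicator)
  have eq: "W (f m) (indicator {u m<..}) = W (f m) (indicator {l m..})"
    using W_open[OF fi] lu01(3,4) unfolding F_def by simp
  show ?thesis unfolding H_def 
    using sandwich(2)[OF fi fnn hc hm hnn bw_ind_set[OF uopen_meas] bw_ind bw_ind le eq] by auto
qed

lemma xalloc_mu: "xalloc f mu = xst"
  unfolding vec_eq_iff xalloc_W xst_def using sandE(1) unfolding E_def by simp

lemma sbar_mu: "sbar h f mu = Sst"
  unfolding sbar_W Sst_def 
proof (rule sum.cong[OF refl])
  fix m 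
  have "W (\<lambda>s. h s * f m s) (indicator {s \<in> {0..1}. mu m s}) = W (\<lambda>s. h s * f m s) (indicator {u m<..})"
    using sandE(2) unfolding E_def .
  also have "\<dots> = H m (ts$m)" using sandH[of "ts$m" m] l_ts ts_u by simp
  finally show "W (\<lambda>s. h s * f m s) (indicator {s \<in> {0..1}. mu m s}) = H m (ts$m)" .
qed

lemma sbar_top_xst: "sbar_top h f xst = Sst"
  unfolding sbar_top_def Sst_def
proof (rule sum.cong[OF refl])
  fix m
  show "(THE v. \<exists>t\<in>{0..1}. (LINT s:{t..1}|lebesgue. f m s) = xst $ m \<and> v = (LINT s:{t..1}|lebesgue. h s * f m s))
        = H m (ts$m)"
  proof (rule the_equality)
    show "\<exists>t\<in>{0..1}. (LINT s:{t..1}|lebesgue. f m s) = xst $ m \<and> H m (ts$m) = (LINT s:{t..1}|lebesgue. h s * f m s)"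
      using ts01[of m] W_ind(1)[OF fi ts01[of m]] W_ind(1)[OF hfi ts01[of m]] unfolding xst_def F_def H_def
      by (intro bexI[of _ "ts$m"]) auto
    fix w assume "\<exists>t\<in>{0..1}. (LINT s:{t..1}|lebesgue. f m s) = xst $ m \<and> w = (LINT s:{t..1}|lebesgue. h s * f m s)"
    then obtain t where t: "t \<in> {0..1}" "(LINT s:{t..1}|lebesgue. f m s) = xst $ m"
      "w = (LINT s:{t..1}|lebesgue. h s * f m s)" by blast
    have "F m t = F m (ts$m)" using t(2) W_ind(1)[OF fi t(1)] unfolding F_def xst_def by simp
    then have "t \<in> Lv m" unfolding Lv_def using t(1) by simp
    then have "t \<in> {l m..u m}" using Lv_props(3,4) by auto
    then have "H m t = H m (ts$m)" using sandH[of t m] sandH[of "ts$m" m] l_ts ts_u by simp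
    then show "w = H m (ts$m)" using t(3) W_ind(1)[OF hfi t(1)] unfolding H_def by simp
  qed
qed

lemma APM_mu: "APM g h \<xi> f m (xalloc f mu) s = g (v m s)"
  unfolding APM_def xalloc_mu sbar_top_xst v_def c_def
  using px_def' ps_def' unfolding pst_def by simp

lemma main_exists: "\<exists>\<mu>. first_best \<xi> h q f \<mu> \<and> implements q (APM g h \<xi> f) f \<mu>"
proof (intro exI conjI)
  have sumq: "(\<Sum>m\<in>UNIV. xalloc f mu $ m) = q" using SUMQ unfolding xalloc_mu xst_def by simp
  have alloc: "allocation q f mu" unfolding allocation_def
    using E_meas sumq unfolding E_def by simp
  show "first_best \<xi> h q f mu" unfolding first_best_def
  proof (intro conjI allI impI alloc)
    fix \<mu>' assume a: "allocation q f \<mu>'"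
    define P where "P m = (indicator {s \<in> {0..1}. \<mu>' m s} :: real \<Rightarrow> real)" for m
    have bwP: "bw (P m)" for m unfolding P_def using a unfolding allocation_def by (intro bw_ind_set) auto
    have b01: "0 \<le> P m s \<and> P m s \<le> 1" for m s unfolding P_def by (auto split: split_indicator)
    have sq: "(\<Sum>m\<in>UNIV. W (f m) (P m)) \<le> q" using a unfolding allocation_def P_def xalloc_W by simp
    have "\<xi> (\<Sum>m\<in>UNIV. W (\<lambda>s. h s * f m s) (P m), \<chi> m. W (f m) (P m)) \<le> \<xi> pst"
      by (rule OPT[OF bwP b01 sq])
    moreover have "sbar h f \<mu>' = (\<Sum>m\<in>UNIV. W (\<lambda>s. h s * f m s) (P m))" unfolding sbar_W P_def ..
    moreover have "xalloc f \<mu>' = (\<chi> m. W (f m) (P m))" unfolding vec_eq_iff xalloc_W P_def by simp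
    moreover have "pst = (sbar h f mu, xalloc f mu)" unfolding pst_def sbar_mu xalloc_mu ..
    ultimately show "\<xi> (sbar h f \<mu>', xalloc f \<mu>') \<le> \<xi> (sbar h f mu, xalloc f mu)" by simp
  qed
  show "implements q (APM g h \<xi> f) f mu" unfolding implements_def
  proof (intro conjI allI impI sumq)
    fix m and s :: real assume s: "s \<in> {0..1}"
    show "mu m s = (\<forall>m' s'. s' \<in> {0..1} \<and> \<not> mu m' s' \<longrightarrow>
              APM g h \<xi> f m' (xalloc f mu) s' < APM g h \<xi> f m (xalloc f mu) s)"
      unfolding APM_mu
    proof
      assume "mu m s"
      show "\<forall>m' s'. s' \<in> {0..1} \<and> \<not> mu m' s' \<longrightarrow> g (v m' s') < g (v m s)"
      proof (intro allI impI)
        fix m' s' assume "s' \<in> {0..1} \<and> \<not> mu m' s'"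
        then have "v m' s' < v m s" using \<open>mu m s\<close> unfolding mu_def by simp
        then show "g (v m' s') < g (v m s)" using gm unfolding strict_mono_def by blast
      qed
    next
      assume "\<forall>m' s'. s' \<in> {0..1} \<and> \<not> mu m' s' \<longrightarrow> g (v m' s') < g (v m s)"
      then show "mu m s" using s by blast
    qed
  qed
qed

end

theorem proposition9:
  fixes \<xi> :: "real \<times> (real^'m::finite) \<Rightarrow> real" and h g :: "real \<Rightarrow> real" and q :: real
  assumes "0 < q" "q < 1"
    and "continuous_on {0..1} h" "strict_mono_on {0..1} h" "\<forall>s\<in>{0..1}. 0 \<le> h s"
    and "strict_mono g" "\<forall>s\<in>{0..1}. g (h s) = s"
    and "\<forall>a a' x x'. a \<le> a' \<and> (\<forall>m. x $ m \<le> x' $ m) \<longrightarrow> \<xi> (a, x) \<le> \<xi> (a', x')"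
    and "\<forall>p. \<xi> differentiable (at p)"
    and "concave_on UNIV \<xi>"
    and "\<forall>p. partial_s \<xi> p > 0"
  shows "\<forall>f. is_state f \<longrightarrow>
           (\<exists>\<mu>. first_best \<xi> h q f \<mu> \<and> implements q (APM g h \<xi> f) f \<mu>)"
proof (intro allI impI)
  fix f :: "'m \<Rightarrow> real \<Rightarrow> real"
  assume st: "is_state f"
  interpret stp \<xi> h g q f
    using assms st by unfold_locales auto
  show "\<exists>\<mu>. first_best \<xi> h q f \<mu> \<and> implements q (APM g h \<xi> f) f \<mu>" by (rule main_exists)
qed

end
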